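(* For any integer $d\ge1$, the number of partial orders on $\{1,\dots,n\}$ of dimension at most $d$ equals $n^{(d+o(1))n}$.
   Context: The dimension of a partial order $\prec$ on $\{1,\dots,n\}$ is the minimum integer $d$ such that there are points $a_1,\dots,a_n\in\mathbb{R}^d$, $a_i=(a_i^{(1)},\dots,a_i^{(d)})$, with $a_i^{(\ell)}\neq a_j^{(\ell)}$ for all distinct $i,j$ and all $\ell$, and such that for distinct $i,j$ we have $i\prec j$ iff $a_i^{(\ell)}\le a_j^{(\ell)}$ for all $\ell=1,\dots,d$. "Equals $n^{(c+o(1))n}$" means equals $n^{(c+\varepsilon(n))n}$ for some function $\varepsilon(n)\to0$ as $n\to\infty$ (for fixed $d$). *)

theory Defs
  imports Complex_Main
begin

definition realizable_in :: "nat \<Rightarrow> (nat \<times> nat) set \<Rightarrow> nat \<Rightarrow> bool" where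
  "realizable_in n R d \<longleftrightarrow>
     (\<exists>a :: nat \<Rightarrow> nat \<Rightarrow> real.
        (\<forall>l<d. inj_on (\<lambda>i. a i l) {1..n}) \<and>
        (\<forall>i\<in>{1..n}. \<forall>j\<in>{1..n}. i \<noteq> j \<longrightarrow>
            ((i, j) \<in> R \<longleftrightarrow> (\<forall>l<d. a i l \<le> a j l))))"

definition order_dim :: "nat \<Rightarrow> (nat \<times> nat) set \<Rightarrow> nat" where
  "order_dim n R = (LEAST d. realizable_in n R d)"

definition num_orders_dim_le :: "nat \<Rightarrow> nat \<Rightarrow> nat" where
  "num_orders_dim_le d n =
     card {R. partial_order_on {1..n} R \<and> order_dim n R \<le> d}"

end

theory Submission
  imports Defs "HOL-Library.FuncSet" "HOL-Real_Asymp.Real_Asymp"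
begin

lemma mod_eq_aux:
  fixes N x y A B :: nat
  assumes "N*A + x = N*B + y" "x < N" "y < N"
  shows "x = y"
proof -
  have "(N*A + x) mod N = (N*B + y) mod N" using assms(1) by simp
  thus ?thesis using assms(2,3) by simp
qed

lemma exists_realizer:
  assumes po: "partial_order_on {1..n} R"
  shows "realizable_in n R n"
proof -
  have sub: "R \<subseteq> {1..n} \<times> {1..n}" and rf: "refl_on {1..n} R" and tr: "trans R" and an: "antisym R"
    using partial_order_onD[OF po] by auto
  define h where "h x = card {y\<in>{1..n}. (y,x)\<in>R \<and> y \<noteq> x}" for x
  define K where "K = (n+1)*(n+1)"
  define c where "c x l = (if (x, l+1) \<in> R then 0 else K) + (n+1) * h x + x" for x l
  have hle: "h x \<le> n" for x
  proof -
    have "h x \<le> card {1..n}" unfolding h_def by (rule card_mono) auto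
    thus ?thesis by simp
  qed
  have hmono: "h x < h y" if "(x,y) \<in> R" "x \<noteq> y" for x y
  proof -
    have "{z\<in>{1..n}. (z,x)\<in>R \<and> z \<noteq> x} \<subset> {z\<in>{1..n}. (z,y)\<in>R \<and> z \<noteq> y}"
    proof
      show "{z\<in>{1..n}. (z,x)\<in>R \<and> z \<noteq> x} \<subseteq> {z\<in>{1..n}. (z,y)\<in>R \<and> z \<noteq> y}"
      proof
        fix z assume z: "z \<in> {z\<in>{1..n}. (z,x)\<in>R \<and> z \<noteq> x}"
        hence "(z,y) \<in> R" using tr that(1) unfolding trans_def by blast
        moreover have "z \<noteq> y" using z that an unfolding antisym_def by blast
        ultimately show "z \<in> {z\<in>{1..n}. (z,y)\<in>R \<and> z \<noteq> y}" using z by blast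
      qed
      have "x \<in> {1..n}" using sub that by auto
      thus "{z\<in>{1..n}. (z,x)\<in>R \<and> z \<noteq> x} \<noteq> {z\<in>{1..n}. (z,y)\<in>R \<and> z \<noteq> y}"
        using that by blast
    qed
    thus ?thesis unfolding h_def by (intro psubset_card_mono) auto
  qed
  define a where "a i l = real (c i l)" for i l
  have "(\<forall>l<n. inj_on (\<lambda>i. a i l) {1..n})"
  proof (intro allI impI inj_onI)
    fix l x y assume "l < n" "x \<in> {1..n}" "y \<in> {1..n}" "a x l = a y l"
    hence e: "c x l = c y l" "x \<le> n" "y \<le> n" unfolding a_def by auto
    have "(n+1) * ((if (x, l+1) \<in> R then 0 else n+1) + h x) + x
        = (n+1) * ((if (y, l+1) \<in> R then 0 else n+1) + h y) + y"
      using e(1) unfolding c_def K_def by (simp add: algebra_simps split: if_splits)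
    thus "x = y" by (rule mod_eq_aux) (use e in auto)
  qed
  moreover have "\<forall>i\<in>{1..n}. \<forall>j\<in>{1..n}. i \<noteq> j \<longrightarrow> ((i, j) \<in> R \<longleftrightarrow> (\<forall>l<n. a i l \<le> a j l))"
  proof (intro ballI impI iffI allI)
    fix i j l assume ij: "i \<in> {1..n}" "j \<in> {1..n}" "i \<noteq> j" "(i,j) \<in> R" "l < n"
    have b: "(if (i, l+1) \<in> R then 0 else K) \<le> (if (j, l+1) \<in> R then 0 else K)"
      using tr ij(4) unfolding trans_def by auto
    have "h i + 1 \<le> h j" using hmono ij by fastforce
    hence "(n+1)*(h i + 1) \<le> (n+1) * h j" by (rule mult_le_mono2)
    moreover have "i \<le> n" using ij by auto
    ultimately have "(n+1) * h i + i \<le> (n+1) * h j + j" by (simp add: algebra_simps)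
    with b have "c i l \<le> c j l" unfolding c_def by linarith
    thus "a i l \<le> a j l" unfolding a_def by simp
  next
    fix i j assume ij: "i \<in> {1..n}" "j \<in> {1..n}" "i \<noteq> j" and all: "\<forall>l<n. a i l \<le> a j l"
    show "(i,j) \<in> R"
    proof (rule ccontr)
      assume nr: "(i,j) \<notin> R"
      have jj: "(j,j) \<in> R" using rf ij unfolding refl_on_def by auto
      have "a i (j-1) \<le> a j (j-1)" using all ij by auto
      hence le: "c i (j-1) \<le> c j (j-1)" unfolding a_def by simp
      have "j - 1 + 1 = j" using ij by auto
      hence ci: "c i (j-1) \<ge> K" and cj: "c j (j-1) = (n+1) * h j + j"
        using nr jj unfolding c_def by auto
      have "(n+1) * h j \<le> (n+1) * n" using hle by (rule mult_le_mono2)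
      moreover have "j \<le> n" using ij by auto
      moreover have "K = (n+1)*n + n + 1" unfolding K_def by (simp add: algebra_simps)
      ultimately show False using le ci cj by linarith
    qed
  qed
  ultimately show ?thesis unfolding realizable_in_def by blast
qed

definition realizer :: "nat \<Rightarrow> (nat \<times> nat) set \<Rightarrow> nat \<Rightarrow> (nat \<Rightarrow> nat \<Rightarrow> real) \<Rightarrow> bool" where
  "realizer n R d a \<longleftrightarrow> (\<forall>l<d. inj_on (\<lambda>i. a i l) {1..n}) \<and>
        (\<forall>i\<in>{1..n}. \<forall>j\<in>{1..n}. i \<noteq> j \<longrightarrow>
            ((i, j) \<in> R \<longleftrightarrow> (\<forall>l<d. a i l \<le> a j l)))"

lemma realizable_iff: "realizable_in n R d = (\<exists>a. realizer n R d a)"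
  by (simp add: realizable_in_def realizer_def)

lemma realizable_pad:
  assumes po: "partial_order_on {1..n} R" and r: "realizable_in n R d'" and "d' \<le> d" "1 \<le> d"
  shows "realizable_in n R d"
proof (cases "d' = 0")
  case True
  have "n \<le> 1"
  proof (rule ccontr)
    assume "\<not> n \<le> 1"
    hence "(1::nat) \<in> {1..n}" "(2::nat) \<in> {1..n}" by auto
    hence "(1,2) \<in> R" "(2,1) \<in> R" using r True unfolding realizable_in_def by auto
    hence "(1::nat) = 2" using partial_order_onD(3)[OF po] unfolding antisym_def by blast
    thus False by simp
  qed
  hence "{1..n} \<subseteq> {1::nat}" by auto
  hence one: "\<forall>i\<in>{1..n}. \<forall>j\<in>{1..n}. i = j" by auto
  have h1: "(\<forall>l<d. inj_on (\<lambda>i. (0::real)) {1..n})" unfolding inj_on_def using one by blast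
  have h2: "\<forall>i\<in>{1..n}. \<forall>j\<in>{1..n}. i \<noteq> j \<longrightarrow> ((i, j) \<in> R \<longleftrightarrow> (\<forall>l<d. (0::real) \<le> 0))"
    using one by blast
  show ?thesis unfolding realizable_in_def
    by (rule exI[of _ "\<lambda>_ _. 0::real"]) (use h1 h2 in simp)
next
  case False
  from r obtain a where "realizer n R d' a" unfolding realizable_iff by blast
  hence a1: "\<forall>l<d'. inj_on (\<lambda>i. a i l) {1..n}"
    and a2: "\<forall>i\<in>{1..n}. \<forall>j\<in>{1..n}. i \<noteq> j \<longrightarrow> ((i, j) \<in> R \<longleftrightarrow> (\<forall>l<d'. a i l \<le> a j l))"
    unfolding realizer_def by auto
  define a' where "a' i l = a i (min l (d'-1))" for i l
  have eq: "(\<forall>l<d. a' i l \<le> a' j l) \<longleftrightarrow> (\<forall>l<d'. a i l \<le> a j l)" for i j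
  proof
    assume H: "\<forall>l<d. a' i l \<le> a' j l"
    show "\<forall>l<d'. a i l \<le> a j l"
    proof (intro allI impI)
      fix l assume "l < d'"
      hence "l < d" "min l (d'-1) = l" using assms by auto
      thus "a i l \<le> a j l" using H unfolding a'_def by metis
    qed
  next
    assume H: "\<forall>l<d'. a i l \<le> a j l"
    show "\<forall>l<d. a' i l \<le> a' j l" unfolding a'_def using H False by auto
  qed
  have h1: "\<forall>l<d. inj_on (\<lambda>i. a' i l) {1..n}" unfolding a'_def using a1 False by auto
  have h2: "\<forall>i\<in>{1..n}. \<forall>j\<in>{1..n}. i \<noteq> j \<longrightarrow> ((i, j) \<in> R \<longleftrightarrow> (\<forall>l<d. a' i l \<le> a' j l))"
    using a2 eq by simp
  show ?thesis unfolding realizable_in_def by (rule exI[of _ a'], rule conjI[OF h1 h2])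
qed

lemma realizable_d:
  assumes po: "partial_order_on {1..n} R" and od: "order_dim n R \<le> d" and d: "1 \<le> d"
  shows "realizable_in n R d"
proof -
  have "realizable_in n R (order_dim n R)"
    unfolding order_dim_def by (rule LeastI[of _ n]) (rule exists_realizer[OF po])
  thus ?thesis using realizable_pad po od d by blast
qed

definition rk :: "nat \<Rightarrow> (nat \<Rightarrow> nat \<Rightarrow> real) \<Rightarrow> nat \<Rightarrow> nat \<Rightarrow> nat" where
  "rk n a l i = card {x\<in>{1..n}. a x l \<le> a i l}"

lemma rk_iff:
  assumes "i \<in> {1..n}" "j \<in> {1..n}"
  shows "a i l \<le> a j l \<longleftrightarrow> rk n a l i \<le> rk n a l j"
proof
  assume "a i l \<le> a j l"
  thus "rk n a l i \<le> rk n a l j" unfolding rk_def by (intro card_mono) auto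
next
  assume H: "rk n a l i \<le> rk n a l j"
  show "a i l \<le> a j l"
  proof (rule ccontr)
    assume "\<not> a i l \<le> a j l"
    hence "{x\<in>{1..n}. a x l \<le> a j l} \<subset> {x\<in>{1..n}. a x l \<le> a i l}" using assms by auto
    hence "rk n a l j < rk n a l i" unfolding rk_def by (intro psubset_card_mono) auto
    thus False using H by simp
  qed
qed

lemma R_repr:
  assumes po: "partial_order_on {1..n} R" and re: "realizer n R d a"
  shows "R = {(i,j). i \<in> {1..n} \<and> j \<in> {1..n} \<and> (i = j \<or> (\<forall>l<d. rk n a l i \<le> rk n a l j))}"
proof -
  have sub: "R \<subseteq> {1..n} \<times> {1..n}" and rf: "refl_on {1..n} R"
    using partial_order_onD[OF po] by auto
  show ?thesis
  proof (intro set_eqI iffI)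
    fix p assume "p \<in> R"
    then obtain i j where p: "p = (i,j)" "(i,j) \<in> R" by (cases p) auto
    hence ij: "i \<in> {1..n}" "j \<in> {1..n}" using sub by auto
    show "p \<in> {(i,j). i \<in> {1..n} \<and> j \<in> {1..n} \<and> (i = j \<or> (\<forall>l<d. rk n a l i \<le> rk n a l j))}"
      using p ij re rk_iff[OF ij] unfolding realizer_def by auto
  next
    fix p assume "p \<in> {(i,j). i \<in> {1..n} \<and> j \<in> {1..n} \<and> (i = j \<or> (\<forall>l<d. rk n a l i \<le> rk n a l j))}"
    then obtain i j where p: "p = (i,j)" "i \<in> {1..n}" "j \<in> {1..n}" "i = j \<or> (\<forall>l<d. rk n a l i \<le> rk n a l j)"
      by auto
    show "p \<in> R"
    proof (cases "i = j")
      case True thus ?thesis using rf p unfolding refl_on_def by auto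
    next
      case False
      thus ?thesis using p re rk_iff[OF p(2,3)] unfolding realizer_def by auto
    qed
  qed
qed

lemma upper_bound:
  assumes d: "1 \<le> d"
  shows "num_orders_dim_le d n \<le> n ^ (n * d)"
proof -
  define S where "S = {R. partial_order_on {1..n} R \<and> order_dim n R \<le> d}"
  define g where "g R = (\<lambda>l\<in>{..<d}. \<lambda>i\<in>{1..n}. rk n (SOME a. realizer n R d a) l i)" for R
  have re: "realizer n R d (SOME a. realizer n R d a)" if "R \<in> S" for R
  proof -
    have "realizable_in n R d" using realizable_d that d unfolding S_def by blast
    hence "\<exists>a. realizer n R d a" unfolding realizable_iff .
    thus ?thesis by (rule someI_ex)
  qed
  have g_app: "g R l i = rk n (SOME a. realizer n R d a) l i" if "l < d" "i \<in> {1..n}" for R l i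
    using that unfolding g_def by simp
  have repr: "R = {(i,j). i \<in> {1..n} \<and> j \<in> {1..n} \<and> (i = j \<or> (\<forall>l<d. g R l i \<le> g R l j))}"
    if RS: "R \<in> S" for R
  proof -
    have po1: "partial_order_on {1..n} R" using RS unfolding S_def by simp
    have "R = {(i,j). i \<in> {1..n} \<and> j \<in> {1..n} \<and> (i = j \<or> (\<forall>l<d. rk n (SOME a. realizer n R d a) l i \<le> rk n (SOME a. realizer n R d a) l j))}"
      by (rule R_repr[OF po1 re[OF RS]])
    also have "\<dots> = {(i,j). i \<in> {1..n} \<and> j \<in> {1..n} \<and> (i = j \<or> (\<forall>l<d. g R l i \<le> g R l j))}"
    proof (rule Collect_cong, clarify)
      fix i j
      show "(i \<in> {1..n} \<and> j \<in> {1..n} \<and> (i = j \<or> (\<forall>l<d. rk n (SOME a. realizer n R d a) l i \<le> rk n (SOME a. realizer n R d a) l j))) =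
            (i \<in> {1..n} \<and> j \<in> {1..n} \<and> (i = j \<or> (\<forall>l<d. g R l i \<le> g R l j)))"
        using g_app[of _ i R] g_app[of _ j R] by metis
    qed
    finally show ?thesis .
  qed
  have "inj_on g S"
  proof (rule inj_onI)
    fix R1 R2 assume R: "R1 \<in> S" "R2 \<in> S" "g R1 = g R2"
    show "R1 = R2" using repr[OF R(1)] repr[OF R(2)] R(3) by simp
  qed
  moreover have "g ` S \<subseteq> PiE {..<d} (\<lambda>_. PiE {1..n} (\<lambda>_. {1..n}))"
  proof
    fix y assume "y \<in> g ` S"
    then obtain R where R: "R \<in> S" "y = g R" by auto
    have "rk n a l i \<in> {1..n}" if "i \<in> {1..n}" for a l i
    proof -
      have "rk n a l i \<le> card {1..n}" unfolding rk_def by (rule card_mono) auto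
      moreover have "0 < card {x\<in>{1..n}. a x l \<le> a i l}" using that
        by (subst card_gt_0_iff) auto
      hence "rk n a l i \<ge> 1" unfolding rk_def by simp
      ultimately show ?thesis by simp
    qed
    thus "y \<in> PiE {..<d} (\<lambda>_. PiE {1..n} (\<lambda>_. {1..n}))" unfolding R g_def by auto
  qed
  ultimately have "card S \<le> card (PiE {..<d} (\<lambda>_. PiE {1..n} (\<lambda>_. {1..n})))"
    by (intro card_inj_on_le) (auto simp: finite_PiE)
  also have "\<dots> = (n ^ n) ^ d" by (simp add: card_PiE)
  finally show ?thesis unfolding num_orders_dim_le_def S_def by (simp add: power_mult)
qed

lemma mult_bound_aux:
  fixes N b m x :: nat
  assumes "b < m" "x < N"
  shows "N*b + x < N*m"
proof -
  have "N*(b+1) \<le> N*m" using assms(1) by (intro mult_le_mono2) simp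
  thus ?thesis using assms(2) by (simp add: algebra_simps)
qed

definition cc :: "nat \<Rightarrow> nat \<Rightarrow> nat \<Rightarrow> nat \<Rightarrow> (nat \<Rightarrow> nat \<Rightarrow> nat) \<Rightarrow> nat \<Rightarrow> nat \<Rightarrow> nat" where
  "cc n k m d b i l =
     (if i \<le> k then (n+2) * b (i-1) l + i
      else if i \<le> k + d*m \<and> (i-k-1) div m = l then (n+2) * ((i-k-1) mod m) + n + 1
      else (n+2)*(m+1) + i)"

definition Rel :: "nat \<Rightarrow> nat \<Rightarrow> nat \<Rightarrow> nat \<Rightarrow> (nat \<Rightarrow> nat \<Rightarrow> nat) \<Rightarrow> (nat \<times> nat) set" where
  "Rel n k m d b = {(i,j). i \<in> {1..n} \<and> j \<in> {1..n} \<and> (i = j \<or> (\<forall>l<d. cc n k m d b i l \<le> cc n k m d b j l))}"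

definition PB :: "nat \<Rightarrow> nat \<Rightarrow> nat \<Rightarrow> (nat \<Rightarrow> nat \<Rightarrow> nat) set" where
  "PB k m d = PiE {..<k} (\<lambda>_. PiE {..<d} (\<lambda>_. {..<m}))"

lemma PB_lt: "b \<in> PB k m d \<Longrightarrow> p < k \<Longrightarrow> l < d \<Longrightarrow> b p l < m"
  unfolding PB_def by (auto simp: PiE_def Pi_def)

lemma cc_free:
  assumes b: "b \<in> PB k m d" and i: "1 \<le> i" "i \<le> k" and l: "l < d" and kn: "k \<le> n"
  shows "cc n k m d b i l = (n+2) * b (i-1) l + i" "cc n k m d b i l < (n+2)*m"
proof -
  show e: "cc n k m d b i l = (n+2) * b (i-1) l + i" using i unfolding cc_def by simp
  have "b (i-1) l < m" using PB_lt[OF b _ l] i by simp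
  moreover have "i < n+2" using i kn by auto
  ultimately show "cc n k m d b i l < (n+2)*m" unfolding e by (rule mult_bound_aux)
qed

lemma cc_frame:
  assumes i: "k < i" "i \<le> k + d*m" "(i-k-1) div m = l"
  shows "cc n k m d b i l = (n+2) * ((i-k-1) mod m) + (n + 1)" "cc n k m d b i l < (n+2)*m"
proof -
  show e: "cc n k m d b i l = (n+2) * ((i-k-1) mod m) + (n + 1)" using i unfolding cc_def by simp
  have "m > 0" using i by (cases m) auto
  hence "(i-k-1) mod m < m" by simp
  thus "cc n k m d b i l < (n+2)*m" unfolding e by (rule mult_bound_aux) simp
qed

lemma cc_big:
  assumes i: "k < i" "\<not> (i \<le> k + d*m \<and> (i-k-1) div m = l)"
  shows "cc n k m d b i l = (n+2)*(m+1) + i" "cc n k m d b i l \<ge> (n+2)*m"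
  using i unfolding cc_def by (auto simp: algebra_simps)

lemma cc_inj:
  assumes b: "b \<in> PB k m d" and l: "l < d" and kn: "k \<le> n"
    and x: "x \<in> {1..n}" and y: "y \<in> {1..n}" and e: "cc n k m d b x l = cc n k m d b y l"
  shows "x = y"
proof -
  have xn: "x < n+2" "x \<ge> 1" and yn: "y < n+2" "y \<ge> 1" using x y by auto
  consider (fr) "x \<le> k" | (fm) "k < x" "x \<le> k + d*m \<and> (x-k-1) div m = l"
    | (bg) "k < x" "\<not>(x \<le> k + d*m \<and> (x-k-1) div m = l)" by linarith
  thus ?thesis
  proof cases
    case fr
    consider (fr') "y \<le> k" | (fm') "k < y" "y \<le> k + d*m \<and> (y-k-1) div m = l"
      | (bg') "k < y" "\<not>(y \<le> k + d*m \<and> (y-k-1) div m = l)" by linarith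
    thus ?thesis
    proof cases
      case fr' thus ?thesis using fr e cc_free[OF b _ _ l kn, of x] cc_free[OF b _ _ l kn, of y] xn yn
        by (metis mod_eq_aux)
    next
      case fm'
      have "(n+2)*b (x-1) l + x = (n+2)*((y-k-1) mod m) + (n+1)"
        using fr fm' e cc_free[OF b _ _ l kn, of x] cc_frame[of k y d m l n b] xn by simp
      hence "x = n+1" by (rule mod_eq_aux) (use xn in auto)
      thus ?thesis using fr kn by simp
    next
      case bg' thus ?thesis using fr e cc_free[OF b _ _ l kn, of x] cc_big[of k y d m l n b] xn by simp
    qed
  next
    case fm
    consider (fr') "y \<le> k" | (fm') "k < y" "y \<le> k + d*m \<and> (y-k-1) div m = l"
      | (bg') "k < y" "\<not>(y \<le> k + d*m \<and> (y-k-1) div m = l)" by linarith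
    thus ?thesis
    proof cases
      case fr'
      have "(n+2)*b (y-1) l + y = (n+2)*((x-k-1) mod m) + (n+1)"
        using fr' fm e cc_free[OF b _ _ l kn, of y] cc_frame[of k x d m l n b] yn by simp
      hence "y = n+1" by (rule mod_eq_aux) (use yn in auto)
      thus ?thesis using fr' kn by simp
    next
      case fm'
      have ex: "cc n k m d b x l = (n+2)*((x-k-1) mod m) + (n+1)" by (rule cc_frame(1)) (use fm in auto)
      have ey: "cc n k m d b y l = (n+2)*((y-k-1) mod m) + (n+1)" by (rule cc_frame(1)) (use fm' in auto)
      have "(n+2)*((x-k-1) mod m) = (n+2)*((y-k-1) mod m)" using e ex ey by linarith
      hence "(x-k-1) mod m = (y-k-1) mod m" by (subst (asm) mult_left_cancel) auto
      moreover have "(x-k-1) div m = (y-k-1) div m" using fm fm' by simp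
      ultimately have "x-k-1 = y-k-1" by (metis div_mult_mod_eq)
      thus ?thesis using fm fm' by simp
    next
      case bg' thus ?thesis using fm e cc_frame[of k x d m l n b] cc_big[of k y d m l n b] by simp
    qed
  next
    case bg
    consider (fr') "y \<le> k" | (fm') "k < y" "y \<le> k + d*m \<and> (y-k-1) div m = l"
      | (bg') "k < y" "\<not>(y \<le> k + d*m \<and> (y-k-1) div m = l)" by linarith
    thus ?thesis
    proof cases
      case fr' thus ?thesis using bg e cc_free[OF b _ _ l kn, of y] cc_big[of k x d m l n b] yn by simp
    next
      case fm' thus ?thesis using bg e cc_frame[of k y d m l n b] cc_big[of k x d m l n b] by simp
    next
      case bg' thus ?thesis using bg e cc_big[of k x d m l n b] cc_big[of k y d m l n b] by simp
    qed
  qed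
qed

lemma Rel_po:
  assumes b: "b \<in> PB k m d" and kn: "k \<le> n" and d: "1 \<le> d"
  shows "partial_order_on {1..n} (Rel n k m d b)"
  unfolding partial_order_on_def preorder_on_def
proof (intro conjI)
  show "Rel n k m d b \<subseteq> {1..n} \<times> {1..n}" unfolding Rel_def by auto
  show "refl_on {1..n} (Rel n k m d b)" unfolding Rel_def refl_on_def by auto
  show "trans (Rel n k m d b)" unfolding Rel_def trans_def
    by (auto intro: order_trans)
  show "antisym (Rel n k m d b)" unfolding antisym_def
  proof (intro allI impI)
    fix x y assume "(x,y) \<in> Rel n k m d b" "(y,x) \<in> Rel n k m d b"
    hence xy: "x \<in> {1..n}" "y \<in> {1..n}" "x = y \<or> cc n k m d b x 0 = cc n k m d b y 0"
      unfolding Rel_def using d by (auto intro: order_antisym)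
    have "0 < d" using d by simp
    thus "x = y" using cc_inj[OF b _ kn xy(1,2)] xy(3) by blast
  qed
qed

lemma Rel_dim:
  assumes b: "b \<in> PB k m d" and kn: "k \<le> n" and d: "1 \<le> d"
  shows "order_dim n (Rel n k m d b) \<le> d"
proof -
  define a where "a i l = real (cc n k m d b i l)" for i l
  have h1: "\<forall>l<d. inj_on (\<lambda>i. a i l) {1..n}"
    unfolding a_def inj_on_def using cc_inj[OF b _ kn] by auto
  have h2: "\<forall>i\<in>{1..n}. \<forall>j\<in>{1..n}. i \<noteq> j \<longrightarrow> ((i, j) \<in> Rel n k m d b \<longleftrightarrow> (\<forall>l<d. a i l \<le> a j l))"
    unfolding a_def Rel_def by auto
  have "realizable_in n (Rel n k m d b) d" unfolding realizable_in_def
    by (rule exI[of _ a], rule conjI[OF h1 h2])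
  thus ?thesis unfolding order_dim_def by (rule Least_le)
qed

lemma Rel_key:
  assumes b: "b \<in> PB k m d" and kmn: "k + d*m \<le> n" and p: "p < k" and l: "l < d" and t: "t < m"
  shows "(p+1, k + 1 + l*m + t) \<in> Rel n k m d b \<longleftrightarrow> b p l \<le> t"
proof -
  define F where "F = k + 1 + l*m + t"
  have lm: "l*m + m \<le> d*m" using l by (metis Suc_leI add.commute mult_Suc mult_le_mono1)
  have Fn: "F \<in> {1..n}" "F \<le> k + d*m" "k < F" unfolding F_def using lm t kmn by auto
  have Fdiv: "(F-k-1) div m = l" "(F-k-1) mod m = t" unfolding F_def using t by auto
  have kn: "k \<le> n" using kmn by simp
  have pn: "p+1 \<in> {1..n}" using p kn by auto
  have cF: "cc n k m d b F l = (n+2)*t + (n+1)" using cc_frame(1)[of k F d m l n b] Fn Fdiv by simp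
  have cFo: "cc n k m d b F l' = (n+2)*(m+1) + F" if "l' \<noteq> l" for l'
    using cc_big(1)[of k F d m l' n b] Fn Fdiv that by simp
  have cp: "cc n k m d b (p+1) l' = (n+2)*b p l' + (p+1)" "cc n k m d b (p+1) l' < (n+2)*m"
    if "l' < d" for l' using cc_free[OF b _ _ that kn, of "p+1"] p by auto
  have "(p+1, F) \<in> Rel n k m d b \<longleftrightarrow> cc n k m d b (p+1) l \<le> cc n k m d b F l"
  proof -
    have "cc n k m d b (p+1) l' \<le> cc n k m d b F l'" if "l' < d" "l' \<noteq> l" for l'
    proof -
      have "(n+2)*m \<le> (n+2)*(m+1)" by simp
      thus ?thesis using cp(2)[OF that(1)] cFo[OF that(2)] by linarith
    qed
    moreover have "p+1 \<noteq> F" using Fn p by simp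
    ultimately show ?thesis unfolding Rel_def using pn Fn l by auto
  qed
  also have "\<dots> \<longleftrightarrow> b p l \<le> t"
  proof
    assume H: "cc n k m d b (p+1) l \<le> cc n k m d b F l"
    show "b p l \<le> t"
    proof (rule ccontr)
      assume "\<not> b p l \<le> t"
      hence "(n+2)*(t+1) \<le> (n+2)*b p l" by (intro mult_le_mono2) simp
      thus False using H cF cp(1)[OF l] by (simp add: algebra_simps)
    qed
  next
    assume "b p l \<le> t"
    hence "(n+2)*b p l \<le> (n+2)*t" by (rule mult_le_mono2)
    moreover have "p + 1 \<le> n+1" using p kn by simp
    ultimately show "cc n k m d b (p+1) l \<le> cc n k m d b F l" using cF cp(1)[OF l] by linarith
  qed
  finally show ?thesis unfolding F_def .
qed

lemma lower_bound:
  assumes kmn: "k + d*m \<le> n" and d: "1 \<le> d"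
  shows "m ^ (d*k) \<le> num_orders_dim_le d n"
proof -
  define S where "S = {R. partial_order_on {1..n} R \<and> order_dim n R \<le> d}"
  have kn: "k \<le> n" using kmn by simp
  have "inj_on (Rel n k m d) (PB k m d)"
  proof (rule inj_onI)
    fix b b' assume bb: "b \<in> PB k m d" "b' \<in> PB k m d" "Rel n k m d b = Rel n k m d b'"
    show "b = b'"
    proof (rule PiE_ext)
      show "b \<in> PiE {..<k} (\<lambda>_. PiE {..<d} (\<lambda>_. {..<m}))" using bb unfolding PB_def by simp
      show "b' \<in> PiE {..<k} (\<lambda>_. PiE {..<d} (\<lambda>_. {..<m}))" using bb unfolding PB_def by simp
      fix p assume p: "p \<in> {..<k}"
      show "b p = b' p"
      proof (rule PiE_ext)
        show "b p \<in> PiE {..<d} (\<lambda>_. {..<m})" using bb p unfolding PB_def by auto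
        show "b' p \<in> PiE {..<d} (\<lambda>_. {..<m})" using bb p unfolding PB_def by auto
        fix l assume l: "l \<in> {..<d}"
        have t1: "b p l < m" "b' p l < m" using PB_lt bb p l by auto
        have "b' p l \<le> b p l"
          using Rel_key[OF bb(1) kmn _ _ t1(1)] Rel_key[OF bb(2) kmn _ _ t1(1)] bb(3) p l by auto
        moreover have "b p l \<le> b' p l"
          using Rel_key[OF bb(1) kmn _ _ t1(2)] Rel_key[OF bb(2) kmn _ _ t1(2)] bb(3) p l by auto
        ultimately show "b p l = b' p l" by simp
      qed
    qed
  qed
  moreover have "Rel n k m d ` PB k m d \<subseteq> S"
    unfolding S_def using Rel_po[OF _ kn d] Rel_dim[OF _ kn d] by auto
  moreover have "finite S"
  proof (rule finite_subset)
    show "S \<subseteq> Pow ({1..n} \<times> {1..n})" unfolding S_def using partial_order_onD(4) by blast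
  qed auto
  ultimately have "card (PB k m d) \<le> card S" by (intro card_inj_on_le) auto
  moreover have "card (PB k m d) = m ^ (d*k)"
    unfolding PB_def by (simp add: card_PiE power_mult)
  ultimately show ?thesis unfolding num_orders_dim_le_def S_def by simp
qed

lemma low_lim:
  "(\<lambda>n::nat. real d * (1 - real d / (ln (real n))^2) * (ln (real n / (ln (real n))^2 - 1) / ln (real n))) \<longlonglongrightarrow> real d"
  by real_asymp

lemma ev_conds:
  "eventually (\<lambda>n::nat. 3 \<le> n \<and> 2 \<le> real n / (ln (real n))^2 \<and> real d \<le> (ln (real n))^2) sequentially"
proof -
  have "eventually (\<lambda>n::nat. 3 \<le> n) sequentially" by (rule eventually_ge_at_top)
  moreover have "eventually (\<lambda>n::nat. 2 \<le> real n / (ln (real n))^2) sequentially" by real_asymp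
  moreover have "eventually (\<lambda>n::nat. real d \<le> (ln (real n))^2) sequentially" by real_asymp
  ultimately show ?thesis by eventually_elim auto
qed

lemma pos_count:
  assumes "1 \<le> d" shows "1 \<le> num_orders_dim_le d n"
  using lower_bound[of 0 d 0 n] assms by simp

lemma lnf_upper:
  assumes d: "1 \<le> d" and n: "2 \<le> n"
  shows "ln (real (num_orders_dim_le d n)) \<le> real d * (real n * ln (real n))"
proof -
  have "real (num_orders_dim_le d n) \<le> real n ^ (n*d)"
    using upper_bound[OF d, of n] by (metis of_nat_le_iff of_nat_power)
  moreover have "0 < real (num_orders_dim_le d n)" using pos_count[OF d, of n] by simp
  ultimately have "ln (real (num_orders_dim_le d n)) \<le> ln (real n ^ (n*d))"
    by (subst ln_le_cancel_iff) (use n in auto)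
  also have "\<dots> = real (n*d) * ln (real n)" using n by (simp add: ln_realpow)
  finally show ?thesis by (simp add: algebra_simps)
qed

lemma lnf_lower:
  assumes d: "1 \<le> d" and n3: "3 \<le> n" and X2: "2 \<le> real n / (ln (real n))^2"
    and dL: "real d \<le> (ln (real n))^2"
  shows "real d * (1 - real d / (ln (real n))^2) * (ln (real n / (ln (real n))^2 - 1) / ln (real n))
         \<le> ln (real (num_orders_dim_le d n)) / (real n * ln (real n))"
proof -
  define L where "L = ln (real n)"
  define X where "X = real n / L^2"
  define m where "m = nat \<lfloor>X\<rfloor>"
  define k where "k = n - d*m"
  have Lpos: "L > 0" unfolding L_def using n3 by simp
  have X2': "2 \<le> X" using X2 unfolding X_def L_def .
  have mX: "real m \<le> X" "X - 1 \<le> real m" unfolding m_def using X2' by linarith+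
  have dmX: "real d * real m \<le> real d * X" using mX by (intro mult_left_mono) auto
  have dX: "real d * X \<le> real n"
  proof -
    have "real d * X = real n * (real d / L^2)" unfolding X_def by simp
    also have "\<dots> \<le> real n * 1" using dL Lpos unfolding L_def[symmetric]
      by (intro mult_left_mono) auto
    finally show ?thesis by simp
  qed
  have dm: "d*m \<le> n" using dmX dX by (metis of_nat_le_iff of_nat_mult order_trans)
  have kmn: "k + d*m \<le> n" unfolding k_def using dm by simp
  have kr: "real k = real n - real d * real m" unfolding k_def using dm by (simp add: of_nat_diff)
  have kge: "real n * (1 - real d / L^2) \<le> real k"
  proof -
    have "real n * (1 - real d / L^2) = real n - real d * X" unfolding X_def by (simp add: algebra_simps)
    thus ?thesis using kr dmX by linarith
  qed
  have fac1: "0 \<le> 1 - real d / L^2" using dL Lpos unfolding L_def[symmetric] by simp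
  have lnm: "ln (X - 1) \<le> ln (real m)" "0 \<le> ln (X - 1)" using mX X2' by auto
  have mpos: "real m > 0" using mX X2' by linarith
  have "real (m ^ (d*k)) \<le> real (num_orders_dim_le d n)"
    using lower_bound[OF kmn d] by (simp only: of_nat_le_iff)
  moreover have "0 < real (m ^ (d*k))" using mpos by simp
  ultimately have "ln (real (m ^ (d*k))) \<le> ln (real (num_orders_dim_le d n))"
    using pos_count[OF d, of n] by (subst ln_le_cancel_iff) auto
  hence A: "real d * real k * ln (real m) \<le> ln (real (num_orders_dim_le d n))"
    using mpos by (simp add: ln_realpow)
  have "real d * (real n * (1 - real d / L^2)) * ln (X - 1) \<le> real d * real k * ln (real m)"
    using kge lnm fac1 by (intro mult_mono mult_left_mono) auto
  with A have B: "real d * (real n * (1 - real d / L^2)) * ln (X - 1) \<le> ln (real (num_orders_dim_le d n))"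
    by linarith
  have npos: "real n * L > 0" using Lpos n3 by simp
  have "real d * (1 - real d / L^2) * (ln (X - 1) / L) =
        (real d * (real n * (1 - real d / L^2)) * ln (X - 1)) / (real n * L)"
    using Lpos n3 by (simp add: field_simps)
  also have "\<dots> \<le> ln (real (num_orders_dim_le d n)) / (real n * L)"
    using B npos by (intro divide_right_mono) auto
  finally show ?thesis unfolding X_def L_def .
qed

theorem corollary2p15:
  fixes d :: nat
  assumes "d \<ge> 1"
  shows "\<exists>\<epsilon> :: nat \<Rightarrow> real. \<epsilon> \<longlonglongrightarrow> 0 \<and>
           (\<forall>n\<ge>1. real (num_orders_dim_le d n) = real n powr ((real d + \<epsilon> n) * real n))"
proof -
  define f where "f n = real (num_orders_dim_le d n)" for n
  define \<epsilon> where "\<epsilon> n = (if 2 \<le> n then ln (f n) / (real n * ln (real n)) - real d else 0)" for n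
  have fpos: "f n > 0" for n unfolding f_def using pos_count[OF assms, of n] by simp
  have id: "f n = real n powr ((real d + \<epsilon> n) * real n)" if "n \<ge> 1" for n
  proof (cases "n = 1")
    case True
    have "num_orders_dim_le d 1 \<le> 1" using upper_bound[OF assms, of 1] by simp
    hence "f 1 = 1" unfolding f_def using pos_count[OF assms, of 1] by simp
    thus ?thesis using True by simp
  next
    case False
    hence n2: "2 \<le> n" using that by simp
    have Lpos: "ln (real n) > 0" using n2 by simp
    have "real n powr ((real d + \<epsilon> n) * real n) = exp ((ln (f n) / (real n * ln (real n))) * real n * ln (real n))"
      using n2 unfolding \<epsilon>_def powr_def by simp
    also have "(ln (f n) / (real n * ln (real n))) * real n * ln (real n) = ln (f n)"
      using Lpos n2 by (simp add: field_simps)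
    finally show ?thesis using fpos by simp
  qed
  have lim: "(\<lambda>n. \<epsilon> n + real d) \<longlonglongrightarrow> real d"
  proof (rule tendsto_sandwich[OF _ _ low_lim tendsto_const])
    show "eventually (\<lambda>n. real d * (1 - real d / (ln (real n))^2) * (ln (real n / (ln (real n))^2 - 1) / ln (real n)) \<le> \<epsilon> n + real d) sequentially"
      using ev_conds[of d]
    proof eventually_elim
      case (elim n)
      thus ?case using lnf_lower[OF assms, of n] unfolding \<epsilon>_def f_def by simp
    qed
    show "eventually (\<lambda>n. \<epsilon> n + real d \<le> real d) sequentially"
      using eventually_ge_at_top[of 2]
    proof eventually_elim
      case (elim n)
      have pos: "real n * ln (real n) > 0" using elim by simp
      have "ln (f n) / (real n * ln (real n)) \<le> real d"
        using lnf_upper[OF assms elim] pos unfolding f_def by (simp add: divide_le_eq)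
      thus ?case using elim unfolding \<epsilon>_def by simp
    qed
  qed
  have "(\<lambda>n. (\<epsilon> n + real d) - real d) \<longlonglongrightarrow> real d - real d"
    by (intro tendsto_diff lim tendsto_const)
  hence "\<epsilon> \<longlonglongrightarrow> 0" by simp
  thus ?thesis using id unfolding f_def by blast
qed

end
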